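(* Let $d\in\{2,3\}$ and let $|\mu\rangle,|\lambda\rangle,|\bar\mu\rangle,|\bar\lambda\rangle\in\mathbb{C}^d\otimes\mathbb{C}^d$ be normalized states of full Schmidt rank $d$. If $|\mu\rangle\otimes|\lambda\rangle$ can be transformed into $|\bar\mu\rangle\otimes|\bar\lambda\rangle$ by a local unitary, then either ($|\bar\mu\rangle$ is LU-equivalent to $|\mu\rangle$ and $|\bar\lambda\rangle$ is LU-equivalent to $|\lambda\rangle$) or ($|\bar\mu\rangle$ is LU-equivalent to $|\lambda\rangle$ and $|\bar\lambda\rangle$ is LU-equivalent to $|\mu\rangle$).
   Context: The state $|\mu\rangle\otimes|\lambda\rangle$ is regarded as a bipartite state between two parties, each holding two $d$-dimensional subsystems. A local unitary is $U_A\otimes U_B$ with $U_A,U_B\in\mathrm{U}(d^2)$. Two bipartite states are LU-equivalent if and only if their tuples of squared Schmidt coefficients coincide up to reordering. *)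

theory Defs
  imports "HOL-Analysis.Analysis"
begin

text \<open>A bipartite pure state on C^A (x) C^B is represented by its coefficient
  matrix C, i.e. the state is the sum over a b of C a b |a> (x) |b>.\<close>

definition adj_mat :: "complex^'n^'n \<Rightarrow> complex^'n^'n" where
  "adj_mat U = (\<chi> i j. cnj (U $ j $ i))"

definition unitary_mat :: "complex^'n^'n \<Rightarrow> bool" where
  "unitary_mat U \<longleftrightarrow> U ** adj_mat U = mat 1 \<and> adj_mat U ** U = mat 1"

definition local_apply ::
  "complex^'a^'a \<Rightarrow> complex^'b^'b \<Rightarrow> complex^'b^'a \<Rightarrow> complex^'b^'a" where
  "local_apply UA UB C = (\<chi> a b. \<Sum>a'\<in>UNIV. \<Sum>b'\<in>UNIV. UA $ a $ a' * UB $ b $ b' * C $ a' $ b')"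

definition LU_equiv :: "complex^'b^'a \<Rightarrow> complex^'b^'a \<Rightarrow> bool" where
  "LU_equiv C D \<longleftrightarrow> (\<exists>UA UB. unitary_mat UA \<and> unitary_mat UB \<and> local_apply UA UB C = D)"

definition normalized :: "complex^'b^'a \<Rightarrow> bool" where
  "normalized C \<longleftrightarrow> (\<Sum>a\<in>UNIV. \<Sum>b\<in>UNIV. (cmod (C $ a $ b))\<^sup>2) = 1"

definition schmidt_rank :: "complex^'b^'a \<Rightarrow> nat" where
  "schmidt_rank C = rank C"

text \<open>Tensor product of two bipartite states on d x d, regarded as a bipartite
  state between parties A = (A1,A2) and B = (B1,B2).\<close>
definition state_tensor :: "complex^'n^'n \<Rightarrow> complex^'n^'n \<Rightarrow> complex^('n\<times>'n)^('n\<times>'n)" where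
  "state_tensor M L = (\<chi> p q. M $ fst p $ fst q * L $ snd p $ snd q)"

end

theory Submission
  imports Defs "HOL-Library.Multiset"
begin


lemma adj_mat_nth[simp]: "adj_mat U $ i $ j = cnj (U $ j $ i)"
  by (simp add: adj_mat_def)

lemma local_apply_eq: "local_apply A B C = A ** C ** transpose B"
proof -
  have "(\<Sum>a'\<in>UNIV. \<Sum>b'\<in>UNIV. A $ a $ a' * B $ b $ b' * C $ a' $ b') =
        (\<Sum>k\<in>UNIV. (\<Sum>a'\<in>UNIV. A $ a $ a' * C $ a' $ k) * B $ b $ k)" for a b
  proof -
    have "(\<Sum>k\<in>UNIV. (\<Sum>a'\<in>UNIV. A $ a $ a' * C $ a' $ k) * B $ b $ k) =
          (\<Sum>k\<in>UNIV. \<Sum>a'\<in>UNIV. A $ a $ a' * B $ b $ k * C $ a' $ k)"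
      by (simp add: sum_distrib_left sum_distrib_right mult_ac)
    also have "\<dots> = (\<Sum>a'\<in>UNIV. \<Sum>k\<in>UNIV. A $ a $ a' * B $ b $ k * C $ a' $ k)"
      by (rule sum.swap)
    finally show ?thesis by simp
  qed
  thus ?thesis
    by (simp add: local_apply_def matrix_matrix_mult_def transpose_def vec_eq_iff)
qed

lemma adj_mult: "adj_mat (A ** B) = adj_mat B ** adj_mat (A::complex^'n^'n)"
  by (simp add: vec_eq_iff matrix_matrix_mult_def mult.commute)

lemma adj_adj[simp]: "adj_mat (adj_mat A) = A"
  by (simp add: vec_eq_iff)

lemma adj_one[simp]: "adj_mat (mat 1 :: complex^'n^'n) = mat 1"
  by (simp add: vec_eq_iff mat_def)

lemma transpose_one[simp]: "transpose (mat 1 :: complex^'n^'n) = mat 1"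
  by (simp add: vec_eq_iff mat_def transpose_def)

lemma adj_transpose: "adj_mat (transpose A) = transpose (adj_mat A)"
  by (simp add: vec_eq_iff transpose_def)

lemma unitary_I: "adj_mat U ** U = mat 1 \<Longrightarrow> unitary_mat (U::complex^'n^'n)"
  unfolding unitary_mat_def using matrix_left_right_inverse by blast

lemma unitary_D: "unitary_mat U \<Longrightarrow> adj_mat U ** U = mat 1" "unitary_mat U \<Longrightarrow> U ** adj_mat U = mat 1"
  by (auto simp: unitary_mat_def)

lemma unitary_one: "unitary_mat (mat 1 :: complex^'n^'n)"
  by (simp add: unitary_mat_def)

lemma unitary_adj: "unitary_mat U \<Longrightarrow> unitary_mat (adj_mat U)"
  by (simp add: unitary_mat_def)

lemma unitary_mult: "unitary_mat U \<Longrightarrow> unitary_mat V \<Longrightarrow> unitary_mat (U ** V)"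
proof -
  assume u: "unitary_mat U" and v: "unitary_mat V"
  have "adj_mat (U ** V) ** (U ** V) = adj_mat V ** (adj_mat U ** U) ** V"
    by (simp add: adj_mult matrix_mul_assoc)
  also have "\<dots> = mat 1" using u v by (simp add: unitary_mat_def)
  finally show ?thesis by (rule unitary_I)
qed

lemma unitary_transpose: "unitary_mat U \<Longrightarrow> unitary_mat (transpose U)"
proof -
  assume u: "unitary_mat U"
  have "adj_mat (transpose U) ** transpose U = transpose (U ** adj_mat U)"
    by (simp add: adj_transpose matrix_transpose_mul)
  also have "\<dots> = mat 1" using u by (simp add: unitary_mat_def)
  finally show ?thesis by (rule unitary_I)
qed

lemma la_comp: "local_apply A B (local_apply C D X) = local_apply (A ** C) (B ** D) X"
  by (simp add: local_apply_eq matrix_transpose_mul matrix_mul_assoc)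

lemma la_id: "local_apply (mat 1) (mat 1) X = X"
  by (simp add: local_apply_eq)

lemma la_inv: "unitary_mat U \<Longrightarrow> unitary_mat V \<Longrightarrow> local_apply (adj_mat U) (adj_mat V) (local_apply U V X) = X"
  by (simp add: la_comp unitary_mat_def la_id)

lemma LU_equiv_la:
  assumes "unitary_mat U" "unitary_mat V" "unitary_mat U2" "unitary_mat V2"
  shows "LU_equiv (local_apply U V X) (local_apply U2 V2 X)"
proof -
  have "local_apply (U2 ** adj_mat U) (V2 ** adj_mat V) (local_apply U V X) = local_apply U2 V2 X"
    using assms by (simp add: la_comp matrix_mul_assoc[symmetric] unitary_mat_def)
  thus ?thesis unfolding LU_equiv_def
    using assms by (meson unitary_adj unitary_mult)
qed


definition cinner :: "complex^'n \<Rightarrow> complex^'n \<Rightarrow> complex" where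
  "cinner x y = (\<Sum>k\<in>UNIV. x$k * cnj (y$k))"

definition diagr :: "('n \<Rightarrow> real) \<Rightarrow> complex^'n^'n" where
  "diagr s = (\<chi> i j. if i = j then complex_of_real (s i) else 0)"

lemma cinner_add_left: "cinner (x + y) z = cinner x z + cinner y z"
  by (simp add: cinner_def distrib_right sum.distrib)
lemma cinner_diff_left: "cinner (x - y) z = cinner x z - cinner y z"
  by (simp add: cinner_def left_diff_distrib sum_subtractf)
lemma cinner_scale_left: "cinner (c *s x) y = c * cinner x y"
  by (simp add: cinner_def sum_distrib_left mult.assoc)
lemma vec_scaleR_nth: "(r *\<^sub>R x) $ k = complex_of_real r * (x $ k)"
  unfolding vector_scaleR_component by (rule scaleR_conv_of_real)

lemma cinner_scaleR_left: "cinner (r *\<^sub>R x) y = of_real r * cinner x y"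
  by (simp add: cinner_def sum_distrib_left vec_scaleR_nth mult.assoc del: vector_scaleR_component)
lemma cinner_cnj: "cnj (cinner x y) = cinner y x"
  by (simp add: cinner_def mult.commute)
lemma cinner_add_right: "cinner z (x + y) = cinner z x + cinner z y"
  by (simp add: cinner_def distrib_left sum.distrib)
lemma cinner_diff_right: "cinner z (x - y) = cinner z x - cinner z y"
  by (simp add: cinner_def right_diff_distrib sum_subtractf)
lemma cinner_scale_right: "cinner x (c *s y) = cnj c * cinner x y"
  by (simp add: cinner_def sum_distrib_left mult_ac)
lemma cinner_scaleR_right: "cinner x (r *\<^sub>R y) = of_real r * cinner x y"
  by (simp add: cinner_def sum_distrib_left vec_scaleR_nth mult_ac del: vector_scaleR_component)
lemma cinner_zero_left[simp]: "cinner 0 x = 0" and cinner_zero_right[simp]: "cinner x 0 = 0"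
  by (simp_all add: cinner_def)

lemma norm_vec_sq: "(norm (x::complex^'n))^2 = (\<Sum>k\<in>UNIV. (cmod (x$k))^2)"
  by (simp add: norm_vec_def L2_set_def sum_nonneg)

lemma cinner_self: "cinner x x = of_real ((norm x)^2)"
proof -
  have "cinner x x = (\<Sum>k\<in>UNIV. complex_of_real ((cmod (x$k))^2))"
    unfolding cinner_def by (rule sum.cong) (simp_all only: complex_norm_square)
  also have "\<dots> = of_real ((norm x)^2)" by (simp only: norm_vec_sq of_real_sum)
  finally show ?thesis .
qed

lemma cinner_self_eq0: "cinner x x = 0 \<longleftrightarrow> x = 0"
  by (simp add: cinner_self)

lemma herm_cinner:
  assumes "adj_mat H = H"
  shows "cinner (H *v x) y = cinner x (H *v y)"
proof -
  have h: "cnj (H $ l $ k) = H $ k $ l" for k l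
    using assms by (metis adj_mat_nth)
  have "cinner (H *v x) y = (\<Sum>k\<in>UNIV. \<Sum>l\<in>UNIV. H$k$l * x$l * cnj (y$k))"
    by (simp add: cinner_def matrix_vector_mult_def sum_distrib_right)
  also have "\<dots> = (\<Sum>l\<in>UNIV. \<Sum>k\<in>UNIV. H$k$l * x$l * cnj (y$k))" by (rule sum.swap)
  also have "\<dots> = cinner x (H *v y)"
    by (simp add: cinner_def matrix_vector_mult_def sum_distrib_left h mult_ac)
  finally show ?thesis .
qed

lemma mvm_scaleR: "H *v (r *\<^sub>R x) = r *\<^sub>R (H *v (x::complex^'n))"
  by (simp add: vec_eq_iff matrix_vector_mult_def scaleR_sum_right)
lemma mvm_add: "H *v (x + y) = H *v x + H *v (y::complex^'n)"
  by (simp add: matrix_vector_right_distrib)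
lemma mvm_scale: "H *v (c *s x) = c *s (H *v (x::complex^'n))"
  by (simp add: vec_eq_iff matrix_vector_mult_def sum_distrib_left mult_ac)

lemma real_of_cnj_eq: "cnj z = z \<Longrightarrow> z = of_real (Re z)"
  by (simp add: complex_eq_iff)

lemma inner_cinner_Re: "(a::complex^'n) \<bullet> u = Re (cinner a u)"
  by (simp add: inner_vec_def cinner_def inner_complex_def)

lemma inner_cinner_Im: "(a::complex^'n) \<bullet> (\<i> *s u) = Im (cinner a u)"
  by (simp add: inner_vec_def cinner_def inner_complex_def algebra_simps)



lemma real_small:
  fixes Y c :: real
  assumes Y0: "Y \<ge> 0" and H: "\<And>t. t > 0 \<Longrightarrow> 2 * t * Y \<le> t^2 * c"
  shows "Y = 0"
proof (rule ccontr)
  assume "Y \<noteq> 0" hence Y: "Y > 0" using Y0 by simp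
  define t where "t = Y / (\<bar>c\<bar> + 1)"
  have t: "t > 0" using Y by (simp add: t_def add_pos_nonneg)
  have "t * (2 * Y) \<le> t * (t * c)" using H[OF t] by (simp add: power2_eq_square mult_ac)
  hence "2 * Y \<le> t * c" using t by simp
  also have "t * c \<le> t * \<bar>c\<bar>" using t by (simp add: mult_left_mono)
  also have "t * \<bar>c\<bar> < Y" using Y by (simp add: t_def field_simps)
  finally show False using Y by simp
qed

lemma exists_orth_eig:
  fixes H :: "complex^'n^'n" and V :: "(complex^'n) set"
  assumes herm: "adj_mat H = H" and finV: "finite V" and cardV: "card V < CARD('n)"
    and eig: "\<forall>u\<in>V. \<exists>c::real. H *v u = of_real c *s u"
  shows "\<exists>w \<mu>. cinner w w = 1 \<and> (\<forall>u\<in>V. cinner w u = 0) \<and> H *v w = complex_of_real \<mu> *s w"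
proof -
  define T where "T = V \<union> (\<lambda>u. \<i> *s u) ` V"
  have finT: "finite T" using finV by (simp add: T_def)
  have "card T \<le> card V + card ((\<lambda>u. \<i> *s u) ` V)" unfolding T_def by (rule card_Un_le)
  also have "\<dots> \<le> card V + card V" using card_image_le[OF finV] by simp
  finally have cT: "card T < DIM(complex^'n)" using cardV by simp
  have "span T \<noteq> UNIV"
  proof
    assume "span T = UNIV"
    hence "dim T = DIM(complex^'n)" by (metis dim_UNIV dim_span)
    moreover have "dim T \<le> card T" using finT by (simp add: dim_le_card span_superset)
    ultimately show False using cT by simp
  qed
  then obtain a :: "complex^'n" where a: "a \<noteq> 0" "\<forall>x\<in>span T. a \<bullet> x = 0"
    using span_not_UNIV_orthogonal by blast
  have aW: "cinner a u = 0" if "u \<in> V" for u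
  proof -
    have "u \<in> span T" "\<i> *s u \<in> span T" using that by (auto simp: T_def intro: span_base)
    hence "Re (cinner a u) = 0" "Im (cinner a u) = 0" using a(2) inner_cinner_Re inner_cinner_Im by metis+
    thus ?thesis by (simp add: complex_eq_iff)
  qed
  define W where "W = {x. \<forall>u\<in>V. cinner x u = 0}"
  define K where "K = sphere (0::complex^'n) 1 \<inter> W"
  have clW: "closed W"
  proof -
    have "W = (\<Inter>u\<in>V. {x. cinner x u = 0})" by (auto simp: W_def)
    moreover have "closed {x. cinner x u = 0}" for u
      unfolding cinner_def by (intro closed_Collect_eq continuous_intros)
    ultimately show ?thesis by auto
  qed
  have cK: "compact K" unfolding K_def using clW compact_sphere by blast
  define a' where "a' = (1 / norm a) *\<^sub>R a"
  have "a' \<in> K" using a(1) aW by (simp add: K_def W_def a'_def cinner_scaleR_left)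
  define f where "f x = Re (cinner (H *v x) x)" for x
  have contf: "continuous_on K f" unfolding f_def cinner_def matrix_vector_mult_def
    by (intro continuous_intros)
  obtain x0 where x0: "x0 \<in> K" "\<forall>y\<in>K. f y \<le> f x0"
    using continuous_attains_sup[OF cK _ contf] \<open>a' \<in> K\<close> by blast
  define \<mu> where "\<mu> = f x0"
  have x0W: "\<forall>u\<in>V. cinner x0 u = 0" and nx0: "norm x0 = 1" using x0 by (auto simp: K_def W_def)
  have c00: "cinner x0 x0 = 1" using nx0 by (simp add: cinner_self)
  have hreal: "cinner (H *v x0) x0 = of_real \<mu>"
  proof -
    have "cnj (cinner (H *v x0) x0) = cinner (H *v x0) x0" by (simp add: cinner_cnj herm_cinner[OF herm])
    thus ?thesis unfolding \<mu>_def f_def by (rule real_of_cnj_eq)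
  qed
  define y where "y = H *v x0 - of_real \<mu> *s x0"
  have Hx0: "H *v x0 = y + of_real \<mu> *s x0" by (simp add: y_def)
  have yW: "cinner y u = 0" if "u \<in> V" for u
  proof -
    from eig that obtain c where c: "H *v u = of_real c *s u" by blast
    have "cinner (H *v x0) u = cinner x0 (H *v u)" by (rule herm_cinner[OF herm])
    also have "\<dots> = cnj (of_real c) * cinner x0 u" unfolding c by (rule cinner_scale_right)
    also have "\<dots> = 0" using x0W that by simp
    finally have h: "cinner (H *v x0) u = 0" .
    have "cinner y u = cinner (H *v x0) u - of_real \<mu> * cinner x0 u"
      unfolding y_def by (simp only: cinner_diff_left cinner_scale_left)
    thus ?thesis using h x0W that by simp
  qed
  have yx0: "cinner y x0 = 0" by (simp add: y_def cinner_diff_left cinner_scale_left hreal c00)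
  have x0y: "cinner x0 y = 0" using yx0 cinner_cnj by (metis complex_cnj_zero)
  define Y where "Y = (norm y)^2"
  have cyy: "cinner y y = of_real Y" by (simp add: Y_def cinner_self)
  have c1: "cinner (H *v x0) y = of_real Y"
    unfolding Hx0 by (simp add: cinner_add_left cinner_scale_left x0y cyy)
  have c2: "cinner (H *v y) x0 = of_real Y"
    unfolding herm_cinner[OF herm] Hx0 by (simp add: cinner_add_right cinner_scale_right yx0 cyy)
  have fsc: "f (r *\<^sub>R x) = r^2 * f x" for r x
    by (simp add: f_def mvm_scaleR cinner_scaleR_left cinner_scaleR_right power2_eq_square)
  have key: "2 * t * Y \<le> t^2 * (\<mu>*Y - f y)" if t: "t > 0" for t
  proof -
    define z where "z = x0 + t *\<^sub>R y"
    have zW: "\<forall>u\<in>V. cinner z u = 0" using x0W yW by (simp add: z_def cinner_add_left cinner_scaleR_left)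
    have czz: "cinner z z = of_real (1 + t^2 * Y)"
      by (simp add: z_def cinner_add_left cinner_add_right cinner_scaleR_left cinner_scaleR_right
          c00 x0y yx0 cyy power2_eq_square)
    hence nz: "(norm z)^2 = 1 + t^2 * Y" unfolding cinner_self of_real_eq_iff .
    have Ypos: "Y \<ge> 0" by (simp add: Y_def)
    have nz1: "(norm z)^2 \<ge> 1" using nz Ypos by simp
    hence nzpos: "norm z > 0" by (metis norm_ge_zero not_less_iff_gr_or_eq one_le_power zero_less_one
        order.not_eq_order_implies_strict power_0_left power_eq_0_iff zero_power2 leD)
    define z' where "z' = (1 / norm z) *\<^sub>R z"
    have "z' \<in> K" using nzpos zW by (simp add: K_def W_def z'_def cinner_scaleR_left)
    hence "f z' \<le> \<mu>" using x0 \<mu>_def by auto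
    moreover have "f z' = f z / (norm z)^2" by (simp add: z'_def fsc power_divide)
    ultimately have fz: "f z \<le> \<mu> * (norm z)^2" using nzpos by (simp add: divide_le_eq)
    have Hz: "H *v z = H *v x0 + t *\<^sub>R (H *v y)" by (simp add: z_def mvm_add mvm_scaleR)
    have "cinner (H *v z) z = cinner (H *v x0) x0 + of_real t * cinner (H *v x0) y
            + of_real t * cinner (H *v y) x0 + of_real t * of_real t * cinner (H *v y) y"
      unfolding Hz
      by (simp add: z_def mvm_scaleR mvm_add cinner_add_left cinner_add_right cinner_scaleR_left cinner_scaleR_right algebra_simps)
    hence "f z = \<mu> + 2 * t * Y + t^2 * f y"
      by (simp add: f_def hreal c1 c2 power2_eq_square)
    thus ?thesis using fz nz by (simp add: algebra_simps power2_eq_square)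
  qed
  have "Y = 0" by (rule real_small[of Y "\<mu>*Y - f y"]) (use key in \<open>auto simp: Y_def\<close>)
  hence "y = 0" by (simp add: Y_def)
  hence "H *v x0 = of_real \<mu> *s x0" using Hx0 by simp
  thus ?thesis using c00 x0W by blast
qed


lemma orth_eig_family:
  fixes H :: "complex^'n^'n" assumes herm: "adj_mat H = H"
  shows "\<exists>(v::'n \<Rightarrow> complex^'n) l. (\<forall>i j. cinner (v i) (v j) = (if i = j then 1 else 0)) \<and>
      (\<forall>i. H *v v i = complex_of_real (l i) *s v i)"
proof -
  have "\<exists>(v::'n \<Rightarrow> complex^'n) l. (\<forall>i\<in>S. \<forall>j\<in>S. cinner (v i) (v j) = (if i = j then 1 else 0)) \<and>
      (\<forall>i\<in>S. H *v v i = complex_of_real (l i) *s v i)" for S :: "'n set"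
  proof -
    have "finite S" by simp
    thus ?thesis
    proof (induction S rule: finite_induct)
      case empty thus ?case by simp
    next
      case (insert j S)
      then obtain v l where o: "\<forall>i\<in>S. \<forall>j\<in>S. cinner (v i) (v j) = (if i = j then 1 else 0)"
        and e: "\<forall>i\<in>S. H *v v i = complex_of_real (l i) *s v i" by blast
      have "S \<subset> UNIV" using insert(2) by blast
      hence "card S < CARD('n)" by (simp add: psubset_card_mono)
      moreover have "card (v ` S) \<le> card S" using insert(1) by (rule card_image_le)
      ultimately have cV: "card (v ` S) < CARD('n)" by simp
      have eV: "\<forall>u\<in>v ` S. \<exists>c::real. H *v u = of_real c *s u" using e by blast
      obtain w \<mu> where w: "cinner w w = 1" "\<forall>u\<in>v ` S. cinner w u = 0" "H *v w = complex_of_real \<mu> *s w"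
        using exists_orth_eig[OF herm _ cV eV] insert(1) by blast
      have w2: "cinner (v i) w = 0" if "i \<in> S" for i
        using w(2) that cinner_cnj[of w "v i"] by (metis complex_cnj_zero image_eqI)
      let ?v = "v(j := w)" and ?l = "l(j := \<mu>)"
      have "\<forall>i\<in>insert j S. \<forall>k\<in>insert j S. cinner (?v i) (?v k) = (if i = k then 1 else 0)"
        using o w w2 insert(2) by auto
      moreover have "\<forall>i\<in>insert j S. H *v ?v i = complex_of_real (?l i) *s ?v i"
        using e w insert(2) by auto
      ultimately show ?case by blast
    qed
  qed
  from this[of UNIV] show ?thesis by auto
qed

lemma sum_if_delta_r: "(\<Sum>k\<in>UNIV. (f::'n::finite \<Rightarrow> complex) k * (if k = b then g k else 0)) = f b * g b"
  by (simp add: if_distrib sum.delta cong: if_cong)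
lemma sum_if_delta_l: "(\<Sum>k\<in>UNIV. (if a = k then g k else 0) * (f::'n::finite \<Rightarrow> complex) k) = g a * f a"
  by (simp add: if_distrib[where f="\<lambda>x. x * _"] sum.delta' cong: if_cong)

lemma mult_diagr_right: "(A ** diagr l) $ a $ b = A $ a $ b * complex_of_real (l b)"
  by (simp add: matrix_matrix_mult_def diagr_def sum_if_delta_r)

lemma mult_diagr_left: "(diagr l ** A) $ a $ b = complex_of_real (l a) * A $ a $ b"
  by (simp add: matrix_matrix_mult_def diagr_def sum_if_delta_l)

lemma diagr_mult: "diagr a ** diagr b = diagr (\<lambda>i. a i * b i)"
  by (simp add: vec_eq_iff mult_diagr_left) (simp add: diagr_def)

lemma adj_diagr: "adj_mat (diagr a) = diagr a"
  by (simp add: vec_eq_iff diagr_def)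

lemma diagr_one: "diagr (\<lambda>i. 1) = mat 1"
  by (simp add: vec_eq_iff diagr_def mat_def)

lemma herm_diag:
  fixes H :: "complex^'n^'n" assumes herm: "adj_mat H = H"
  shows "\<exists>U l. unitary_mat U \<and> H ** U = U ** diagr l"
proof -
  obtain v :: "'n \<Rightarrow> complex^'n" and l where o: "\<forall>i j. cinner (v i) (v j) = (if i = j then 1 else 0)"
      and e: "\<forall>i. H *v v i = complex_of_real (l i) *s v i"
    using orth_eig_family[OF herm] by blast
  define U :: "complex^'n^'n" where "U = (\<chi> k i. v i $ k)"
  have "adj_mat U ** U = mat 1"
  proof -
    have "(adj_mat U ** U) $ i $ j = cinner (v j) (v i)" for i j
      by (simp add: U_def matrix_matrix_mult_def cinner_def mult.commute)
    thus ?thesis using o by (simp add: vec_eq_iff mat_def)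
  qed
  hence "unitary_mat U" by (rule unitary_I)
  moreover have "H ** U = U ** diagr l"
  proof -
    have "(H ** U) $ k $ i = (H *v v i) $ k" for k i
      by (simp add: U_def matrix_matrix_mult_def matrix_vector_mult_def)
    thus ?thesis using e by (simp add: vec_eq_iff mult_diagr_right U_def mult.commute)
  qed
  ultimately show ?thesis by blast
qed

lemma unitary_I2: "U ** adj_mat U = mat 1 \<Longrightarrow> unitary_mat (U::complex^'n^'n)"
  unfolding unitary_mat_def using matrix_left_right_inverse by blast

lemma fullrank_rows:
  fixes C :: "complex^'n^'n"
  assumes r: "rank C = CARD('n)" and w: "\<forall>k. (\<Sum>a\<in>UNIV. w $ a * C $ a $ k) = 0"
  shows "w = 0"
proof -
  have "vec.dim (rows C) = CARD('n)" using r by (simp add: row_rank_def_gen)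
  hence "vec.span (rows C) = UNIV"
    by (metis vec.dim_eq_full vec.dim_subset_UNIV vec.span_UNIV vec_dim_card)
  then obtain B where "B ** C = mat 1" using matrix_left_invertible_span_rows_gen by blast
  hence CB: "C ** B = mat 1" using matrix_left_right_inverse by blast
  have "w v* C = 0" using w by (simp add: vec_eq_iff vector_matrix_mult_def)
  hence "(w v* C) v* B = 0" by (simp add: vec_eq_iff vector_matrix_mult_def)
  thus ?thesis by (simp add: vector_matrix_mul_assoc CB)
qed



lemma svd_full:
  fixes C :: "complex^'n^'n"
  assumes r: "rank C = CARD('n)"
  shows "\<exists>U V s. unitary_mat U \<and> unitary_mat V \<and> (\<forall>i. s i > 0) \<and> C = local_apply U V (diagr s)"
proof -
  define H where "H = C ** adj_mat C"
  have herm: "adj_mat H = H" by (simp add: H_def adj_mult)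
  obtain U l where U: "unitary_mat U" and HU: "H ** U = U ** diagr l" using herm_diag[OF herm] by blast
  define X where "X = adj_mat U ** C"
  have XX: "X ** adj_mat X = diagr l"
  proof -
    have "X ** adj_mat X = adj_mat U ** (H ** U)" by (simp add: X_def H_def adj_mult matrix_mul_assoc)
    also have "\<dots> = (adj_mat U ** U) ** diagr l" by (simp add: HU matrix_mul_assoc)
    also have "\<dots> = diagr l" using U by (simp add: unitary_mat_def)
    finally show ?thesis .
  qed
  have lsum: "complex_of_real (l i) = (\<Sum>k\<in>UNIV. complex_of_real ((cmod (X$i$k))^2))" for i
  proof -
    have "complex_of_real (l i) = (X ** adj_mat X) $ i $ i" by (simp add: XX diagr_def)
    also have "\<dots> = (\<Sum>k\<in>UNIV. X$i$k * cnj (X$i$k))" by (simp add: matrix_matrix_mult_def)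
    also have "\<dots> = (\<Sum>k\<in>UNIV. complex_of_real ((cmod (X$i$k))^2))" by (simp only: complex_norm_square)
    finally show ?thesis .
  qed
  have lsum': "l i = (\<Sum>k\<in>UNIV. (cmod (X$i$k))^2)" for i
    using lsum[of i] by (metis of_real_eq_iff of_real_sum)
  have lpos: "l i > 0" for i
  proof (rule ccontr)
    assume "\<not> l i > 0"
    moreover have "l i \<ge> 0" unfolding lsum' by (simp add: sum_nonneg)
    ultimately have "(\<Sum>k\<in>UNIV. (cmod (X$i$k))^2) = 0" using lsum' by simp
    hence X0: "\<forall>k. X$i$k = 0" by (simp add: sum_nonneg_eq_0_iff)
    define w where "w = (\<chi> a. adj_mat U $ i $ a)"
    have "\<forall>k. (\<Sum>a\<in>UNIV. w$a * C$a$k) = 0" using X0 by (simp add: w_def X_def matrix_matrix_mult_def)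
    hence "w = 0" by (rule fullrank_rows[OF r])
    moreover have "(adj_mat U ** U) $ i $ i = 1" using U by (simp add: unitary_mat_def mat_def)
    ultimately show False by (simp add: matrix_matrix_mult_def w_def vec_eq_iff)
  qed
  define s where "s i = sqrt (l i)" for i
  have spos: "s i > 0" for i using lpos by (simp add: s_def)
  have ss: "s i * s i = l i" for i using lpos[of i] by (simp add: s_def)
  define W where "W = diagr (\<lambda>i. 1 / s i) ** X"
  have "W ** adj_mat W = mat 1"
  proof -
    have "W ** adj_mat W = diagr (\<lambda>i. 1/s i) ** (X ** adj_mat X) ** diagr (\<lambda>i. 1/s i)"
      by (simp add: W_def adj_mult adj_diagr matrix_mul_assoc)
    also have "\<dots> = diagr (\<lambda>i. 1/s i * l i * (1/s i))" by (simp add: XX diagr_mult)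
    also have "\<dots> = diagr (\<lambda>i. 1)"
    proof -
      have "1/s i * l i * (1/s i) = 1" for i using spos[of i] ss[of i] lpos[of i] by (simp add: field_simps)
      thus ?thesis by (simp only:)
    qed
    finally show ?thesis by (simp add: diagr_one)
  qed
  hence W: "unitary_mat W" by (rule unitary_I2)
  have "diagr s ** W = diagr (\<lambda>i. s i * (1 / s i)) ** X" by (simp add: W_def diagr_mult matrix_mul_assoc)
  also have "\<dots> = X"
  proof -
    have "s i * (1 / s i) = 1" for i using spos[of i] by simp
    thus ?thesis by (simp add: diagr_one)
  qed
  finally have sW: "diagr s ** W = X" .
  have "C = U ** X" using U by (simp add: X_def matrix_mul_assoc unitary_mat_def)
  also have "\<dots> = local_apply U (transpose W) (diagr s)"
    by (simp add: local_apply_eq sW[symmetric] matrix_mul_assoc)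
  finally show ?thesis using U W unitary_transpose spos by blast
qed

lemma la_gram:
  assumes "unitary_mat V"
  shows "local_apply U V X ** adj_mat (local_apply U V X) = U ** (X ** adj_mat X) ** adj_mat U"
proof -
  have T: "transpose V ** adj_mat (transpose V) = mat 1"
    using assms by (simp add: adj_transpose matrix_transpose_mul[symmetric] unitary_mat_def)
  have e: "local_apply U V X ** adj_mat (local_apply U V X) = (U ** X) ** (transpose V ** adj_mat (transpose V)) ** (adj_mat X ** adj_mat U)"
    by (simp add: local_apply_eq adj_mult matrix_mul_assoc)
  show ?thesis unfolding e T by (simp add: matrix_mul_assoc)
qed

lemma diag_sandwich: "(A ** diagr d ** B) $ a $ c = (\<Sum>k\<in>UNIV. A$a$k * complex_of_real (d k) * B$k$c)"
  unfolding matrix_matrix_mult_def[of "A ** diagr d" B] by (simp add: mult_diagr_right)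

lemma diagr_gram: "diagr s ** adj_mat (diagr s) = diagr (\<lambda>i. (s i)^2)"
  by (simp add: adj_diagr diagr_mult power2_eq_square)

lemma normalized_sv:
  assumes n: "normalized C" and U: "unitary_mat U" and V: "unitary_mat V"
    and C: "C = local_apply U V (diagr s)"
  shows "(\<Sum>i\<in>UNIV. (s i)^2) = 1"
proof -
  have G: "C ** adj_mat C = U ** diagr (\<lambda>i. (s i)^2) ** adj_mat U"
    unfolding C la_gram[OF V] diagr_gram ..
  have "complex_of_real 1 = (\<Sum>a\<in>UNIV. \<Sum>b\<in>UNIV. complex_of_real ((cmod (C$a$b))^2))"
    by (simp only: of_real_sum[symmetric] n[unfolded normalized_def])
  also have "\<dots> = (\<Sum>a\<in>UNIV. (C ** adj_mat C) $ a $ a)"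
    by (simp only: matrix_matrix_mult_def vec_lambda_beta complex_norm_square adj_mat_nth)
  also have "\<dots> = (\<Sum>a\<in>UNIV. \<Sum>k\<in>UNIV. U$a$k * complex_of_real ((s k)^2) * cnj (U$a$k))"
    unfolding G diag_sandwich by simp
  also have "\<dots> = (\<Sum>k\<in>UNIV. complex_of_real ((s k)^2) * (\<Sum>a\<in>UNIV. cnj (U$a$k) * U$a$k))"
    by (subst sum.swap) (simp add: sum_distrib_left mult_ac)
  also have "\<dots> = (\<Sum>k\<in>UNIV. complex_of_real ((s k)^2) * (adj_mat U ** U) $ k $ k)"
    by (simp add: matrix_matrix_mult_def)
  also have "\<dots> = complex_of_real (\<Sum>k\<in>UNIV. (s k)^2)"
    using U by (simp add: unitary_mat_def mat_def)
  finally show ?thesis by (metis of_real_eq_iff)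
qed



lemma unitary_row_sum:
  assumes "unitary_mat (Q::complex^'n^'n)"
  shows "(\<Sum>j\<in>UNIV. (cmod (Q$i$j))^2) = 1"
proof -
  have "complex_of_real (\<Sum>j\<in>UNIV. (cmod (Q$i$j))^2) = (Q ** adj_mat Q) $ i $ i"
    by (simp only: of_real_sum matrix_matrix_mult_def vec_lambda_beta complex_norm_square adj_mat_nth)
  also have "\<dots> = 1" using assms by (simp add: unitary_mat_def mat_def)
  finally show ?thesis by (metis of_real_eq_1_iff)
qed

lemma unitary_col_sum:
  assumes "unitary_mat (Q::complex^'n^'n)"
  shows "(\<Sum>i\<in>UNIV. (cmod (Q$i$j))^2) = 1"
proof -
  have "complex_of_real (\<Sum>i\<in>UNIV. (cmod (Q$i$j))^2) = (adj_mat Q ** Q) $ j $ j"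
    by (simp only: of_real_sum matrix_matrix_mult_def vec_lambda_beta complex_norm_square adj_mat_nth mult.commute)
  also have "\<dots> = 1" using assms by (simp add: unitary_mat_def mat_def)
  finally show ?thesis by (metis of_real_eq_1_iff)
qed

lemma count_le:
  fixes Q :: "complex^'n^'n" and f g :: "'n \<Rightarrow> real"
  assumes U: "unitary_mat Q" and supp: "\<And>i j. Q$i$j \<noteq> 0 \<Longrightarrow> f i = g j"
  shows "card {i. f i = x} \<le> card {j. g j = x}"
proof -
  let ?I = "{i. f i = x}" and ?J = "{j. g j = x}"
  let ?q = "\<lambda>i j. (cmod (Q$i$j))^2"
  have "real (card ?I) = (\<Sum>i\<in>?I. \<Sum>j\<in>UNIV. ?q i j)" using unitary_row_sum[OF U] by simp
  also have "\<dots> = (\<Sum>i\<in>?I. \<Sum>j\<in>?J. ?q i j)"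
  proof (rule sum.cong[OF refl])
    fix i assume i: "i \<in> ?I"
    show "(\<Sum>j\<in>UNIV. ?q i j) = (\<Sum>j\<in>?J. ?q i j)"
    proof (rule sum.mono_neutral_right)
      show "\<forall>j\<in>UNIV - ?J. ?q i j = 0" using i supp by force
    qed auto
  qed
  also have "\<dots> = (\<Sum>j\<in>?J. \<Sum>i\<in>?I. ?q i j)" by (rule sum.swap)
  also have "\<dots> \<le> (\<Sum>j\<in>?J. \<Sum>i\<in>UNIV. ?q i j)"
    by (intro sum_mono sum_mono2) auto
  also have "\<dots> = real (card ?J)" using unitary_col_sum[OF U] by simp
  finally show ?thesis by simp
qed

lemma diag_counts:
  assumes Q: "unitary_mat Q" and R: "unitary_mat R"
    and eq: "diagr t = local_apply Q R (diagr s)"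
    and sp: "\<forall>i. s i > 0" and tp: "\<forall>i. t i > 0"
  shows "card {i. t i = x} = card {i. s i = x}"
proof -
  have "diagr t ** adj_mat (diagr t) = Q ** (diagr s ** adj_mat (diagr s)) ** adj_mat Q"
    unfolding eq la_gram[OF R] ..
  hence "diagr (\<lambda>i. (t i)^2) ** Q = Q ** diagr (\<lambda>i. (s i)^2) ** (adj_mat Q ** Q)"
    by (simp add: diagr_gram matrix_mul_assoc)
  hence E: "diagr (\<lambda>i. (t i)^2) ** Q = Q ** diagr (\<lambda>i. (s i)^2)"
    using Q by (simp add: unitary_mat_def)
  have supp: "t i = s j" if "Q$i$j \<noteq> 0" for i j
  proof -
    have "complex_of_real ((t i)^2) * Q$i$j = Q$i$j * complex_of_real ((s j)^2)"
      using arg_cong[OF E, of "\<lambda>M. M$i$j"] by (simp only: mult_diagr_left mult_diagr_right)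
    hence "complex_of_real ((t i)^2) = complex_of_real ((s j)^2)" using that by (simp only: mult.commute mult_cancel_left) simp
    hence "(t i)^2 = (s j)^2" by (simp only: of_real_eq_iff)
    thus ?thesis using sp tp by (metis less_imp_le power2_eq_iff_nonneg)
  qed
  have "card {i. t i = x} \<le> card {j. s j = x}" by (rule count_le[OF Q]) (use supp in auto)
  moreover have "card {j. s j = x} \<le> card {i. t i = x}"
    by (rule count_le[OF unitary_adj[OF Q]]) (use supp in auto)
  ultimately show ?thesis by simp
qed

lemma LU_counts:
  assumes "LU_equiv (local_apply U1 V1 (diagr s)) (local_apply U2 V2 (diagr t))"
    and "unitary_mat U1" "unitary_mat V1" "unitary_mat U2" "unitary_mat V2"
    and "\<forall>i. s i > 0" "\<forall>i. t i > 0"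
  shows "card {i. t i = x} = card {i. s i = x}"
proof -
  obtain UA UB where u: "unitary_mat UA" "unitary_mat UB"
    and e: "local_apply UA UB (local_apply U1 V1 (diagr s)) = local_apply U2 V2 (diagr t)"
    using assms(1) unfolding LU_equiv_def by blast
  have "diagr t = local_apply (adj_mat U2) (adj_mat V2) (local_apply U2 V2 (diagr t))"
    using assms by (simp add: la_inv)
  also have "\<dots> = local_apply (adj_mat U2 ** (UA ** U1)) (adj_mat V2 ** (UB ** V1)) (diagr s)"
    unfolding e[symmetric] la_comp ..
  finally show ?thesis
    by (rule diag_counts[rotated 2]) (use assms u in \<open>auto intro!: unitary_mult unitary_adj\<close>)
qed



lemma sum_UNIV_prod: "(\<Sum>k\<in>(UNIV::('a::finite\<times>'b::finite) set). f k) = (\<Sum>a\<in>UNIV. \<Sum>b\<in>UNIV. f (a,b))"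
  by (simp add: sum.cartesian_product UNIV_Times_UNIV[symmetric] del: UNIV_Times_UNIV)

lemma st_nth: "state_tensor A B $ p $ q = A $ fst p $ fst q * B $ snd p $ snd q"
  by (simp add: state_tensor_def)

lemma st_mult: "state_tensor A B ** state_tensor C D = state_tensor (A ** C) (B ** (D::complex^'n^'n))"
proof -
  have "(\<Sum>r\<in>UNIV. A $ fst p $ fst r * B $ snd p $ snd r * (C $ fst r $ fst q * D $ snd r $ snd q)) =
        (\<Sum>r1\<in>UNIV. A $ fst p $ r1 * C $ r1 $ fst q) * (\<Sum>r2\<in>UNIV. B $ snd p $ r2 * D $ r2 $ snd q)" for p q
    by (simp add: sum_UNIV_prod sum_product mult_ac)
  thus ?thesis by (simp add: vec_eq_iff matrix_matrix_mult_def st_nth)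
qed

lemma st_adj: "adj_mat (state_tensor A B) = state_tensor (adj_mat A) (adj_mat B)"
  by (simp add: vec_eq_iff st_nth)

lemma st_transpose: "transpose (state_tensor A B) = state_tensor (transpose A) (transpose B)"
  by (simp add: vec_eq_iff st_nth transpose_def)

lemma st_one: "state_tensor (mat 1) (mat 1) = (mat 1 :: complex^('n::finite\<times>'n)^('n\<times>'n))"
  by (auto simp add: vec_eq_iff st_nth mat_def prod_eq_iff)

lemma unitary_st: "unitary_mat A \<Longrightarrow> unitary_mat B \<Longrightarrow> unitary_mat (state_tensor A (B::complex^'n^'n))"
  by (rule unitary_I) (simp add: st_adj st_mult unitary_mat_def st_one)

lemma st_la: "state_tensor (local_apply U1 V1 X1) (local_apply U2 V2 X2) =
   local_apply (state_tensor U1 U2) (state_tensor V1 V2) (state_tensor X1 (X2::complex^'n^'n))"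
  by (simp add: local_apply_eq st_mult st_transpose)

lemma st_diagr: "state_tensor (diagr s) (diagr t) = diagr (\<lambda>k. s (fst k) * t (snd k))"
  by (auto simp add: vec_eq_iff st_nth diagr_def prod_eq_iff)

lemma perm_exists:
  fixes s s' :: "'n::finite \<Rightarrow> real"
  assumes c: "\<forall>x. card {i. s i = x} = card {i. s' i = x}"
  shows "\<exists>\<pi>. bij \<pi> \<and> (\<forall>i. s (\<pi> i) = s' i)"
proof -
  have "\<forall>x. \<exists>h. bij_betw h {i. s' i = x} {i. s i = x}"
    using c by (metis finite finite_same_card_bij)
  then obtain h where h: "\<And>x. bij_betw (h x) {i. s' i = x} {i. s i = x}" by metis
  define \<pi> where "\<pi> i = h (s' i) i" for i
  have sp: "s (\<pi> i) = s' i" for i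
    using bij_betwE[OF h[of "s' i"]] by (auto simp: \<pi>_def)
  have "inj \<pi>"
  proof (rule injI)
    fix i j assume e: "\<pi> i = \<pi> j"
    hence "s' i = s' j" using sp by metis
    hence "h (s' i) i = h (s' i) j" using e by (simp add: \<pi>_def)
    thus "i = j" using bij_betw_imp_inj_on[OF h[of "s' i"]] \<open>s' i = s' j\<close>
      by (auto dest: inj_onD)
  qed
  hence "bij \<pi>" by (simp add: bij_def finite_UNIV_inj_surj)
  thus ?thesis using sp by blast
qed

lemma sum_two_delta:
  fixes a b :: "'n::finite"
  shows "(\<Sum>k\<in>UNIV. (if k = a then (1::complex) else 0) * f k * (if k = b then 1 else 0)) = (if a = b then f a else 0)"
proof -
  have "(\<Sum>k\<in>UNIV. (if k = a then (1::complex) else 0) * f k * (if k = b then 1 else 0)) =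
        (\<Sum>k\<in>UNIV. if k = a then (if a = b then f a else 0) else 0)"
    by (rule sum.cong) auto
  also have "\<dots> = (if a = b then f a else 0)" by (subst sum.delta) auto
  finally show ?thesis .
qed

lemma cnj_if01: "cnj (if c then (1::complex) else 0) = (if c then 1 else 0)" by simp

lemma perm_LU:
  fixes s s' :: "'n::finite \<Rightarrow> real"
  assumes c: "\<forall>x. card {i. s i = x} = card {i. s' i = x}"
  shows "\<exists>P. unitary_mat P \<and> local_apply P P (diagr s) = diagr s'"
proof -
  obtain \<pi> where b: "bij \<pi>" and sp: "\<forall>i. s (\<pi> i) = s' i" using perm_exists[OF c] by blast
  have inj: "\<pi> i = \<pi> j \<longleftrightarrow> i = j" for i j using b by (auto simp: bij_def dest: injD)
  define P :: "complex^'n^'n" where "P = (\<chi> i j. if j = \<pi> i then 1 else 0)"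
  have "P ** adj_mat P = mat 1"
  proof -
    have "(P ** adj_mat P) $ i $ j = (\<Sum>k\<in>UNIV. (if k = \<pi> i then (1::complex) else 0) * (\<lambda>k. 1) k * (if k = \<pi> j then 1 else 0))" for i j
      by (simp add: P_def matrix_matrix_mult_def cnj_if01)
    hence "(P ** adj_mat P) $ i $ j = (if \<pi> i = \<pi> j then 1 else 0)" for i j by (simp only: sum_two_delta)
    thus ?thesis by (simp add: vec_eq_iff mat_def inj)
  qed
  hence P: "unitary_mat P" by (rule unitary_I2)
  have "local_apply P P (diagr s) = diagr s'"
  proof -
    have "local_apply P P (diagr s) $ i $ j = (\<Sum>k\<in>UNIV. (if k = \<pi> i then (1::complex) else 0) * (\<lambda>k. complex_of_real (s k)) k * (if k = \<pi> j then 1 else 0))" for i j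
      by (simp add: local_apply_eq diag_sandwich P_def transpose_def)
    hence "local_apply P P (diagr s) $ i $ j = (if \<pi> i = \<pi> j then complex_of_real (s (\<pi> i)) else 0)" for i j
      by (simp only: sum_two_delta)
    thus ?thesis by (simp add: vec_eq_iff diagr_def inj sp)
  qed
  thus ?thesis using P by blast
qed

lemma LU_from_counts:
  assumes "unitary_mat U" "unitary_mat V" "unitary_mat U'" "unitary_mat V'"
    and c: "\<forall>x. card {i. s i = x} = card {i. s' i = x}"
  shows "LU_equiv (local_apply U V (diagr s)) (local_apply U' V' (diagr s'))"
proof -
  obtain P where P: "unitary_mat P" "local_apply P P (diagr s) = diagr s'" using perm_LU[OF c] by blast
  have "local_apply U' V' (diagr s') = local_apply (U' ** P) (V' ** P) (diagr s)"
    unfolding P(2)[symmetric] la_comp ..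
  thus ?thesis using LU_equiv_la assms P(1) unitary_mult by metis
qed



lemma mset2_eq: assumes "{#a,b#} = {#c,d::'a#}" shows "(a=c \<and> b=d) \<or> (a=d \<and> b=c)"
proof -
  have "a \<in># {#c,d#}" using assms by (metis union_single_eq_member)
  hence "a = c \<or> a = d" by simp
  moreover have "a = c \<Longrightarrow> b = d" using assms by simp
  moreover have "a = d \<Longrightarrow> b = c" using assms by (simp add: add_mset_commute)
  ultimately show ?thesis by blast
qed

lemma core4:
  fixes p q r s q' s' :: real
  assumes "0 \<le> p" "p \<le> q" "p \<le> r" "r \<le> s" "p \<le> q'" "r \<le> s'" "q+s = q'+s'"
  and M: "{#q,s,p+s,q+r#} = {#q',s',p+s',q'+r#}"
  shows "(q=q' \<and> s=s') \<or> (p=r \<and> q=s' \<and> s=q')"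
proof -
  have "q' \<in># {#q,s,p+s,q+r#}" using M by simp
  hence "q' = q \<or> q' = s \<or> q' = p+s \<or> q' = q+r" by auto
  moreover {
    assume "q' = q" hence ?thesis using assms by simp }
  moreover {
    assume h: "q' = s" hence s': "s' = q" using assms by simp
    have "{#q,s,p+s,q+r#} = {#s,q,p+q,s+r#}" using M unfolding h s' .
    hence "{#p+s,q+r#} = {#p+q,s+r#}" by (simp add: add_mset_commute)
    from mset2_eq[OF this] have ?thesis using h s' by smt }
  moreover {
    assume h: "q' = p+s" hence s': "s' = q - p" using assms by simp
    have "{#q,s,p+s,q+r#} = {#p+s,q-p,q,p+s+r#}" using M unfolding h s' by simp
    hence "{#s,q+r#} = {#q-p,p+s+r#}" by (simp add: add_mset_commute)
    from mset2_eq[OF this] have ?thesis using h s' assms by smt }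
  moreover {
    assume h: "q' = q+r" hence s': "s' = s - r" using assms by simp
    have "{#q,s,p+s,q+r#} = {#q+r,s-r,p+(s-r),q+r+r#}" using M unfolding h s' by simp
    hence M2: "{#q,s,p+s#} = {#s-r,p+(s-r),q+r+r#}" by (simp add: add_mset_commute)
    have ?thesis
    proof (cases "r = 0")
      case True thus ?thesis using h s' by simp
    next
      case False
      have "s \<in># {#s-r,p+(s-r),q+r+r#}" using M2[symmetric] by simp
      hence "s = p+(s-r) \<or> s = q+r+r" using False by auto
      moreover {
        assume "s = p+(s-r)" hence pr: "p = r" by simp
        have "{#q,s,p+s#} = {#s-r,s,q+r+r#}" using M2 unfolding pr by simp
        hence "{#q,p+s#} = {#s-r,q+r+r#}" by (simp add: add_mset_commute)
        from mset2_eq[OF this] have ?thesis using h s' pr False by smt }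
      moreover {
        assume hs: "s = q+r+r"
        have "{#q,s,p+s#} = {#s-r,p+(s-r),s#}" using M2 unfolding hs by simp
        hence "{#q,p+s#} = {#s-r,p+(s-r)#}" by (simp add: add_mset_commute)
        from mset2_eq[OF this] have ?thesis using hs False assms by smt }
      ultimately show ?thesis by blast
    qed }
  ultimately show ?thesis by blast
qed

lemma core9:
  fixes p q r s p' q' r' s' :: real
  assumes o: "0 \<le> p" "p \<le> q" "p \<le> r" "r \<le> s" "0 \<le> p'" "p' \<le> q'" "p' \<le> r'" "r' \<le> s'"
  and D: "{#0,p,q,r,s,p+r,p+s,q+r,q+s#} = {#0,p',q',r',s',p'+r',p'+s',q'+r',q'+s'#}"
  shows "(p=p' \<and> q=q' \<and> r=r' \<and> s=s') \<or> (p=r' \<and> q=s' \<and> r=p' \<and> s=q')"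
proof -
  have D0: "{#p,q,r,s,p+r,p+s,q+r,q+s#} = {#p',q',r',s',p'+r',p'+s',q'+r',q'+s'#}" using D by simp
  have "p \<in># {#p',q',r',s',p'+r',p'+s',q'+r',q'+s'#}" using D0[symmetric] by simp
  hence "p \<ge> p'" using o by auto
  moreover have "p' \<in># {#p,q,r,s,p+r,p+s,q+r,q+s#}" using D0 by simp
  hence "p' \<ge> p" using o by auto
  ultimately have pp: "p' = p" by simp
  have "q+s \<in># {#0,p',q',r',s',p'+r',p'+s',q'+r',q'+s'#}" using D[symmetric] by simp
  hence "q+s \<le> q'+s'" using o by auto
  moreover have "q'+s' \<in># {#0,p,q,r,s,p+r,p+s,q+r,q+s#}" using D by simp
  hence "q'+s' \<le> q+s" using o by auto
  ultimately have qs: "q'+s' = q+s" by simp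
  have "sum_mset {#0,p,q,r,s,p+r,p+s,q+r,q+s#} = sum_mset {#0,p',q',r',s',p'+r',p'+s',q'+r',q'+s'#}"
    using D by simp
  hence "3 * p+3 * q+3 * r+3 * s = 3 * p'+3 * q'+3 * r'+3 * s'" by simp
  hence rr: "r' = r" using pp qs by simp
  have "{#p,q,r,s,p+r,p+s,q+r,q+s#} = {#p,q',r,s',p+r,p+s',q'+r,q+s#}" using D0 unfolding pp rr qs .
  hence M: "{#q,s,p+s,q+r#} = {#q',s',p+s',q'+r#}" by (simp add: add_mset_commute)
  have "(q=q' \<and> s=s') \<or> (p=r \<and> q=s' \<and> s=q')"
    by (rule core4[OF _ _ _ _ _ _ qs[symmetric] M]) (use o pp rr in auto)
  thus ?thesis using pp rr by auto
qed

lemma core9_sym: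
  fixes p q r s p' q' r' s' :: real
  assumes o: "0 \<le> p" "p \<le> q" "0 \<le> r" "r \<le> s" "0 \<le> p'" "p' \<le> q'" "0 \<le> r'" "r' \<le> s'"
  and D: "{#0,p,q,r,s,p+r,p+s,q+r,q+s#} = {#0,p',q',r',s',p'+r',p'+s',q'+r',q'+s'#}"
  shows "(p=p' \<and> q=q' \<and> r=r' \<and> s=s') \<or> (p=r' \<and> q=s' \<and> r=p' \<and> s=q')"
proof -
  have sw: "{#0,p,q,r,s,p+r,p+s,q+r,q+s#} = {#0,r,s,p,q,r+p,r+q,s+p,s+q#}" for p q r s :: real
    by (simp add: add_mset_commute add.commute)
  have D1: "{#0,p,q,r,s,p+r,p+s,q+r,q+s#} = {#0,r',s',p',q',r'+p',r'+q',s'+p',s'+q'#}"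
    using D sw[of p' q' r' s'] by simp
  have D2: "{#0,r,s,p,q,r+p,r+q,s+p,s+q#} = {#0,p',q',r',s',p'+r',p'+s',q'+r',q'+s'#}"
    using D sw[of p q r s] by simp
  have D3: "{#0,r,s,p,q,r+p,r+q,s+p,s+q#} = {#0,r',s',p',q',r'+p',r'+q',s'+p',s'+q'#}"
    using D1 sw[of p q r s] by simp
  show ?thesis
  proof (cases "p \<le> r")
    case True
    show ?thesis
    proof (cases "p' \<le> r'")
      case True
      show ?thesis by (rule core9) (use o D \<open>p \<le> r\<close> True in auto)
    next
      case False
      have "(p=r' \<and> q=s' \<and> r=p' \<and> s=q') \<or> (p=p' \<and> q=q' \<and> r=r' \<and> s=s')"
        by (rule core9[OF _ _ _ _ _ _ _ _ D1]) (use o False \<open>p \<le> r\<close> in auto)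
      thus ?thesis by auto
    qed
  next
    case False
    show ?thesis
    proof (cases "p' \<le> r'")
      case True
      have "(r=p' \<and> s=q' \<and> p=r' \<and> q=s') \<or> (r=r' \<and> s=s' \<and> p=p' \<and> q=q')"
        by (rule core9[OF _ _ _ _ _ _ _ _ D2]) (use o False True in auto)
      thus ?thesis by auto
    next
      case F2: False
      have "(r=r' \<and> s=s' \<and> p=p' \<and> q=q') \<or> (r=p' \<and> s=q' \<and> p=r' \<and> q=s')"
        by (rule core9[OF _ _ _ _ _ _ _ _ D3]) (use o False F2 in auto)
      thus ?thesis by auto
    qed
  qed
qed

lemma norm3:
  fixes a1 a2 a3 c1 c2 c3 :: real
  assumes "0 < a1" "0 < c1" "a2/a1 = c2/c1" "a3/a1 = c3/c1" "a1+a2+a3 = 1" "c1+c2+c3 = 1"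
  shows "a1 = c1 \<and> a2 = c2 \<and> a3 = c3"
proof -
  have c2: "c2 = a2 * (c1/a1)" and c3: "c3 = a3 * (c1/a1)" using assms by (auto simp: field_simps)
  have "1 = (a1+a2+a3) * (c1/a1)" using assms(2,6) c2 c3 assms(1) by (simp add: field_simps)
  hence "c1/a1 = 1" using assms(5) by simp
  hence "c1 = a1" using assms(1) by (simp add: field_simps)
  thus ?thesis using c2 c3 assms(1) by simp
qed

lemma lnrat:
  fixes a b c d :: real
  assumes "0<a" "0<b" "0<c" "0<d" "ln a - ln b = ln c - ln d"
  shows "b/a = d/c"
proof -
  have "ln (a/b) = ln (c/d)" using assms by (simp add: ln_div)
  hence "a/b = c/d" using assms by simp
  thus ?thesis using assms by (simp add: field_simps)
qed

lemma prodmax: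
  fixes x y u v :: real
  assumes "0 \<le> x" "x \<le> u" "0 \<le> y" "y \<le> v" shows "x * y \<le> u * v"
  using assms by (simp add: mult_mono)

lemma prod3:
  fixes a1 a2 a3 b1 b2 b3 c1 c2 c3 e1 e2 e3 :: real
  assumes pos: "0<a3" "0<b3" "0<c3" "0<e3"
  and ord: "a3 \<le> a2" "a2 \<le> a1" "b3 \<le> b2" "b2 \<le> b1" "c3 \<le> c2" "c2 \<le> c1" "e3 \<le> e2" "e2 \<le> e1"
  and sums: "a1+a2+a3 = 1" "b1+b2+b3 = 1" "c1+c2+c3 = 1" "e1+e2+e3 = 1"
  and P: "{#a1 * b1,a1 * b2,a1 * b3,a2 * b1,a2 * b2,a2 * b3,a3 * b1,a3 * b2,a3 * b3#} = {#c1 * e1,c1 * e2,c1 * e3,c2 * e1,c2 * e2,c2 * e3,c3 * e1,c3 * e2,c3 * e3#}"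
  shows "(a1=c1 \<and> a2=c2 \<and> a3=c3 \<and> b1=e1 \<and> b2=e2 \<and> b3=e3) \<or> (a1=e1 \<and> a2=e2 \<and> a3=e3 \<and> b1=c1 \<and> b2=c2 \<and> b3=c3)"
proof -
  have pa: "0<a1" "0<a2" "0<a3" "0<b1" "0<b2" "0<b3" "0<c1" "0<c2" "0<c3" "0<e1" "0<e2" "0<e3"
    using pos ord by linarith+
  have "a1 * b1 \<in># {#c1 * e1,c1 * e2,c1 * e3,c2 * e1,c2 * e2,c2 * e3,c3 * e1,c3 * e2,c3 * e3#}" using P[symmetric] by simp
  moreover have "c2 * e1 \<le> c1 * e1" "c3 * e1 \<le> c1 * e1" "c1 * e2 \<le> c1 * e1" "c1 * e3 \<le> c1 * e1"
     "c2 * e2 \<le> c1 * e1" "c2 * e3 \<le> c1 * e1" "c3 * e2 \<le> c1 * e1" "c3 * e3 \<le> c1 * e1"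
    by (rule prodmax; use pa ord in linarith)+
  ultimately have m1: "a1 * b1 \<le> c1 * e1" by auto
  have "c1 * e1 \<in># {#a1 * b1,a1 * b2,a1 * b3,a2 * b1,a2 * b2,a2 * b3,a3 * b1,a3 * b2,a3 * b3#}" using P by simp
  moreover have "a2 * b1 \<le> a1 * b1" "a3 * b1 \<le> a1 * b1" "a1 * b2 \<le> a1 * b1" "a1 * b3 \<le> a1 * b1"
     "a2 * b2 \<le> a1 * b1" "a2 * b3 \<le> a1 * b1" "a3 * b2 \<le> a1 * b1" "a3 * b3 \<le> a1 * b1"
    by (rule prodmax; use pa ord in linarith)+
  ultimately have m2: "c1 * e1 \<le> a1 * b1" by auto
  have mx: "c1 * e1 = a1 * b1" using m1 m2 by simp
  define f where "f z = ln (a1 * b1) - ln z" for z :: real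
  define p where "p = ln a1 - ln a2"
  define q where "q = ln a1 - ln a3"
  define r where "r = ln b1 - ln b2"
  define s where "s = ln b1 - ln b3"
  define p' where "p' = ln c1 - ln c2"
  define q' where "q' = ln c1 - ln c3"
  define r' where "r' = ln e1 - ln e2"
  define s' where "s' = ln e1 - ln e3"
  have fl: "f (x * y) = (ln a1 - ln x) + (ln b1 - ln y)" if "0<x" "0<y" for x y
    using that pa by (simp add: f_def ln_mult)
  have fr: "f (x * y) = (ln c1 - ln x) + (ln e1 - ln y)" if "0<x" "0<y" for x y
    using that pa mx[symmetric] by (simp add: f_def ln_mult)
  have L: "image_mset f {#a1 * b1,a1 * b2,a1 * b3,a2 * b1,a2 * b2,a2 * b3,a3 * b1,a3 * b2,a3 * b3#} = {#0,r,s,p,p+r,p+s,q,q+r,q+s#}"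
    using pa by (simp add: fl p_def q_def r_def s_def)
  have R: "image_mset f {#c1 * e1,c1 * e2,c1 * e3,c2 * e1,c2 * e2,c2 * e3,c3 * e1,c3 * e2,c3 * e3#} = {#0,r',s',p',p'+r',p'+s',q',q'+r',q'+s'#}"
    using pa by (simp add: fr p'_def q'_def r'_def s'_def)
  have "{#0,r,s,p,p+r,p+s,q,q+r,q+s#} = {#0,r',s',p',p'+r',p'+s',q',q'+r',q'+s'#}"
    using P L R by metis
  hence D: "{#0,p,q,r,s,p+r,p+s,q+r,q+s#} = {#0,p',q',r',s',p'+r',p'+s',q'+r',q'+s'#}"
    by (simp add: add_mset_commute)
  have o: "0 \<le> p" "p \<le> q" "0 \<le> r" "r \<le> s" "0 \<le> p'" "p' \<le> q'" "0 \<le> r'" "r' \<le> s'"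
    using pa ord by (simp_all add: p_def q_def r_def s_def p'_def q'_def r'_def s'_def)
  from core9_sym[OF o D]
  show ?thesis
  proof
    assume h: "p=p' \<and> q=q' \<and> r=r' \<and> s=s'"
    have A: "a1 = c1 \<and> a2 = c2 \<and> a3 = c3"
      by (rule norm3) (use h pa sums in \<open>auto intro!: lnrat simp: p_def p'_def q_def q'_def\<close>)
    have B: "b1 = e1 \<and> b2 = e2 \<and> b3 = e3"
      by (rule norm3) (use h pa sums in \<open>auto intro!: lnrat simp: r_def r'_def s_def s'_def\<close>)
    show ?thesis using A B by simp
  next
    assume h: "p=r' \<and> q=s' \<and> r=p' \<and> s=q'"
    have A: "a1 = e1 \<and> a2 = e2 \<and> a3 = e3"
      by (rule norm3) (use h pa sums in \<open>auto intro!: lnrat simp: p_def r'_def q_def s'_def\<close>)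
    have B: "b1 = c1 \<and> b2 = c2 \<and> b3 = c3"
      by (rule norm3) (use h pa sums in \<open>auto intro!: lnrat simp: r_def p'_def s_def q'_def\<close>)
    show ?thesis using A B by simp
  qed
qed


lemma core2:
  fixes p r p' r' :: real
  assumes o: "0 \<le> p" "0 \<le> r" "0 \<le> p'" "0 \<le> r'"
  and D: "{#0,r,p,p+r#} = {#0,r',p',p'+r'#}"
  shows "(p=p' \<and> r=r') \<or> (p=r' \<and> r=p')"
proof -
  have "p+r \<in># {#0,r',p',p'+r'#}" using D[symmetric] by simp
  hence "p+r \<le> p'+r'" using o by auto
  moreover have "p'+r' \<in># {#0,r,p,p+r#}" using D by simp
  hence "p'+r' \<le> p+r" using o by auto
  ultimately have m: "p'+r' = p+r" by simp
  have "{#r,p#} = {#r',p'#}" using D unfolding m by (simp add: add_mset_commute)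
  from mset2_eq[OF this] show ?thesis by auto
qed

lemma norm2:
  fixes a1 a2 c1 c2 :: real
  assumes "0 < a1" "0 < c1" "a2/a1 = c2/c1" "a1+a2 = 1" "c1+c2 = 1"
  shows "a1 = c1 \<and> a2 = c2"
proof -
  have c2: "c2 = a2 * (c1/a1)" using assms by (auto simp: field_simps)
  have "1 = (a1+a2) * (c1/a1)" using assms(2,5) c2 assms(1) by (simp add: field_simps)
  hence "c1/a1 = 1" using assms(4) by simp
  hence "c1 = a1" using assms(1) by (simp add: field_simps)
  thus ?thesis using c2 assms(1) by simp
qed

lemma prod2:
  fixes a1 a2 b1 b2 c1 c2 e1 e2 :: real
  assumes pos: "0<a2" "0<b2" "0<c2" "0<e2"
  and ord: "a2 \<le> a1" "b2 \<le> b1" "c2 \<le> c1" "e2 \<le> e1"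
  and sums: "a1+a2 = 1" "b1+b2 = 1" "c1+c2 = 1" "e1+e2 = 1"
  and P: "{#a1 * b1,a1 * b2,a2 * b1,a2 * b2#} = {#c1 * e1,c1 * e2,c2 * e1,c2 * e2#}"
  shows "(a1=c1 \<and> a2=c2 \<and> b1=e1 \<and> b2=e2) \<or> (a1=e1 \<and> a2=e2 \<and> b1=c1 \<and> b2=c2)"
proof -
  have pa: "0<a1" "0<a2" "0<b1" "0<b2" "0<c1" "0<c2" "0<e1" "0<e2"
    using pos ord by linarith+
  have "a1 * b1 \<in># {#c1 * e1,c1 * e2,c2 * e1,c2 * e2#}" using P[symmetric] by simp
  moreover have "c2 * e1 \<le> c1 * e1" "c1 * e2 \<le> c1 * e1" "c2 * e2 \<le> c1 * e1"
    by (rule prodmax; use pa ord in linarith)+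
  ultimately have m1: "a1 * b1 \<le> c1 * e1" by auto
  have "c1 * e1 \<in># {#a1 * b1,a1 * b2,a2 * b1,a2 * b2#}" using P by simp
  moreover have "a2 * b1 \<le> a1 * b1" "a1 * b2 \<le> a1 * b1" "a2 * b2 \<le> a1 * b1"
    by (rule prodmax; use pa ord in linarith)+
  ultimately have m2: "c1 * e1 \<le> a1 * b1" by auto
  have mx: "c1 * e1 = a1 * b1" using m1 m2 by simp
  define f where "f z = ln (a1 * b1) - ln z" for z :: real
  define p where "p = ln a1 - ln a2"
  define r where "r = ln b1 - ln b2"
  define p' where "p' = ln c1 - ln c2"
  define r' where "r' = ln e1 - ln e2"
  have fl: "f (x * y) = (ln a1 - ln x) + (ln b1 - ln y)" if "0<x" "0<y" for x y
    using that pa by (simp add: f_def ln_mult)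
  have fr: "f (x * y) = (ln c1 - ln x) + (ln e1 - ln y)" if "0<x" "0<y" for x y
    using that pa mx[symmetric] by (simp add: f_def ln_mult)
  have L: "image_mset f {#a1 * b1,a1 * b2,a2 * b1,a2 * b2#} = {#0,r,p,p+r#}"
    using pa by (simp add: fl p_def r_def)
  have R: "image_mset f {#c1 * e1,c1 * e2,c2 * e1,c2 * e2#} = {#0,r',p',p'+r'#}"
    using pa by (simp add: fr p'_def r'_def)
  have D: "{#0,r,p,p+r#} = {#0,r',p',p'+r'#}" using P L R by metis
  have o: "0 \<le> p" "0 \<le> r" "0 \<le> p'" "0 \<le> r'"
    using pa ord by (simp_all add: p_def r_def p'_def r'_def)
  from core2[OF o D]
  show ?thesis
  proof
    assume h: "p=p' \<and> r=r'"
    have A: "a1 = c1 \<and> a2 = c2"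
      by (rule norm2) (use h pa sums in \<open>auto intro!: lnrat simp: p_def p'_def\<close>)
    have B: "b1 = e1 \<and> b2 = e2"
      by (rule norm2) (use h pa sums in \<open>auto intro!: lnrat simp: r_def r'_def\<close>)
    show ?thesis using A B by simp
  next
    assume h: "p=r' \<and> r=p'"
    have A: "a1 = e1 \<and> a2 = e2"
      by (rule norm2) (use h pa sums in \<open>auto intro!: lnrat simp: p_def r'_def\<close>)
    have B: "b1 = c1 \<and> b2 = c2"
      by (rule norm2) (use h pa sums in \<open>auto intro!: lnrat simp: r_def p'_def\<close>)
    show ?thesis using A B by simp
  qed
qed

definition mset_of :: "('n::finite \<Rightarrow> real) \<Rightarrow> real multiset" where
  "mset_of f = image_mset f (mset_set UNIV)"

lemma count_mset_of: "count (mset_of f) x = card {i. f i = x}"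
  by (simp add: mset_of_def count_image_mset vimage_def)

lemma mset_of_eq_iff: "mset_of f = mset_of g \<longleftrightarrow> (\<forall>x. card {i. f i = x} = card {i. g i = x})"
  by (simp add: multiset_eq_iff count_mset_of)

lemma mset_of_comp: "image_mset h (mset_of f) = mset_of (\<lambda>i. h (f i))"
  by (simp add: mset_of_def multiset.map_comp o_def)

lemma sort3:
  fixes f :: "'n::finite \<Rightarrow> real"
  assumes "CARD('n) = 3"
  shows "\<exists>i1 i2 i3. UNIV = {i1,i2,i3} \<and> i1\<noteq>i2 \<and> i2\<noteq>i3 \<and> i1\<noteq>i3 \<and> f i2 \<le> f i1 \<and> f i3 \<le> f i2"
proof -
  obtain x y z where U: "(UNIV::'n set) = {x,y,z}" and d: "x\<noteq>y" "y\<noteq>z" "x\<noteq>z"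
    using assms card_3_iff by metis
  show ?thesis
  proof (cases "f y \<le> f x")
    case True
    show ?thesis
    proof (cases "f z \<le> f y")
      case True thus ?thesis using \<open>f y \<le> f x\<close> U d by blast
    next
      case False
      show ?thesis
      proof (cases "f z \<le> f x")
        case True
        hence "UNIV = {x,z,y} \<and> x\<noteq>z \<and> z\<noteq>y \<and> x\<noteq>y \<and> f z \<le> f x \<and> f y \<le> f z"
          using False U d by auto
        thus ?thesis by blast
      next
        case F2: False
        hence "UNIV = {z,x,y} \<and> z\<noteq>x \<and> x\<noteq>y \<and> z\<noteq>y \<and> f x \<le> f z \<and> f y \<le> f x"
          using False \<open>f y \<le> f x\<close> U d by auto
        thus ?thesis by blast
      qed
    qed
  next
    case False
    show ?thesis
    proof (cases "f z \<le> f x")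
      case True
      hence "UNIV = {y,x,z} \<and> y\<noteq>x \<and> x\<noteq>z \<and> y\<noteq>z \<and> f x \<le> f y \<and> f z \<le> f x"
        using False U d by auto
      thus ?thesis by blast
    next
      case F2: False
      show ?thesis
      proof (cases "f z \<le> f y")
        case True
        hence "UNIV = {y,z,x} \<and> y\<noteq>z \<and> z\<noteq>x \<and> y\<noteq>x \<and> f z \<le> f y \<and> f x \<le> f z"
          using False F2 U d by auto
        thus ?thesis by blast
      next
        case F3: False
        hence "UNIV = {z,y,x} \<and> z\<noteq>y \<and> y\<noteq>x \<and> z\<noteq>x \<and> f y \<le> f z \<and> f x \<le> f y"
          using False F2 U d by auto
        thus ?thesis by blast
      qed
    qed
  qed
qed

lemma sort2:
  fixes f :: "'n::finite \<Rightarrow> real"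
  assumes "CARD('n) = 2"
  shows "\<exists>i1 i2. UNIV = {i1,i2} \<and> i1\<noteq>i2 \<and> f i2 \<le> f i1"
proof -
  obtain x y where U: "(UNIV::'n set) = {x,y}" and d: "x\<noteq>y"
    using assms card_2_iff by metis
  show ?thesis
  proof (cases "f y \<le> f x")
    case True thus ?thesis using U d by blast
  next
    case False
    hence "UNIV = {y,x} \<and> y\<noteq>x \<and> f x \<le> f y" using U d by auto
    thus ?thesis by blast
  qed
qed



lemma ms3: assumes "UNIV = {x,y,z}" "x\<noteq>y" "y\<noteq>z" "x\<noteq>z" shows "mset_of f = {#f x, f y, f z#}"
  unfolding mset_of_def assms(1) using assms(2-4) by simp

lemma sm3: assumes "UNIV = {x,y,z}" "x\<noteq>y" "y\<noteq>z" "x\<noteq>z" shows "(\<Sum>i\<in>UNIV. f i) = f x + f y + (f z::real)"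
  unfolding assms(1) using assms(2-4) by simp

lemma sm2: assumes "UNIV = {x,y}" "x\<noteq>y" shows "(\<Sum>i\<in>UNIV. f i) = f x + (f y::real)"
  unfolding assms(1) using assms(2) by simp

lemma mp3:
  fixes f g :: "'n::finite \<Rightarrow> real"
  assumes X: "UNIV = {x,y,z}" "x\<noteq>y" "y\<noteq>z" "x\<noteq>z" and Y: "UNIV = {u,v,w}" "u\<noteq>v" "v\<noteq>w" "u\<noteq>w"
  shows "mset_of (\<lambda>k::'n\<times>'n. f (fst k) * g (snd k)) =
    {#f x * g u, f x * g v, f x * g w, f y * g u, f y * g v, f y * g w, f z * g u, f z * g v, f z * g w#}"
proof -
  have "(UNIV::('n\<times>'n) set) = UNIV \<times> UNIV" by simp
  also have "\<dots> = {x,y,z} \<times> {u,v,w}" by (simp only: X(1)[symmetric] Y(1)[symmetric])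
  also have "\<dots> = {(x,u),(x,v),(x,w),(y,u),(y,v),(y,w),(z,u),(z,v),(z,w)}" by auto
  finally have U: "(UNIV::('n\<times>'n) set) = {(x,u),(x,v),(x,w),(y,u),(y,v),(y,w),(z,u),(z,v),(z,w)}" .
  show ?thesis unfolding mset_of_def U using X(2-4) Y(2-4) by simp
qed

lemma ms2: assumes "UNIV = {x,y}" "x\<noteq>y" shows "mset_of f = {#f x, f y#}"
  unfolding mset_of_def assms(1) using assms(2) by simp

lemma mp2:
  fixes f g :: "'n::finite \<Rightarrow> real"
  assumes X: "UNIV = {x,y}" "x\<noteq>y" and Y: "UNIV = {u,v}" "u\<noteq>v"
  shows "mset_of (\<lambda>k::'n\<times>'n. f (fst k) * g (snd k)) = {#f x * g u, f x * g v, f y * g u, f y * g v#}"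
proof -
  have "(UNIV::('n\<times>'n) set) = UNIV \<times> UNIV" by simp
  also have "\<dots> = {x,y} \<times> {u,v}" by (simp only: X(1)[symmetric] Y(1)[symmetric])
  also have "\<dots> = {(x,u),(x,v),(y,u),(y,v)}" by auto
  finally have U: "(UNIV::('n\<times>'n) set) = {(x,u),(x,v),(y,u),(y,v)}" .
  show ?thesis unfolding mset_of_def U using X(2) Y(2) by simp
qed

lemma comb3:
  fixes a b c e :: "'n::finite \<Rightarrow> real"
  assumes card: "CARD('n) = 3"
    and pos: "\<forall>i. 0 < a i" "\<forall>i. 0 < b i" "\<forall>i. 0 < c i" "\<forall>i. 0 < e i"
    and sums: "(\<Sum>i\<in>UNIV. a i) = 1" "(\<Sum>i\<in>UNIV. b i) = 1" "(\<Sum>i\<in>UNIV. c i) = 1" "(\<Sum>i\<in>UNIV. e i) = 1"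
    and P: "mset_of (\<lambda>k::'n\<times>'n. a (fst k) * b (snd k)) = mset_of (\<lambda>k. c (fst k) * e (snd k))"
  shows "(mset_of a = mset_of c \<and> mset_of b = mset_of e) \<or> (mset_of a = mset_of e \<and> mset_of b = mset_of c)"
proof -
  obtain i1 i2 i3 where I: "UNIV = {i1,i2,i3}" "i1\<noteq>i2" "i2\<noteq>i3" "i1\<noteq>i3" "a i2 \<le> a i1" "a i3 \<le> a i2"
    using sort3[OF card, of a] by blast
  obtain j1 j2 j3 where J: "UNIV = {j1,j2,j3}" "j1\<noteq>j2" "j2\<noteq>j3" "j1\<noteq>j3" "b j2 \<le> b j1" "b j3 \<le> b j2"
    using sort3[OF card, of b] by blast
  obtain k1 k2 k3 where K: "UNIV = {k1,k2,k3}" "k1\<noteq>k2" "k2\<noteq>k3" "k1\<noteq>k3" "c k2 \<le> c k1" "c k3 \<le> c k2"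
    using sort3[OF card, of c] by blast
  obtain l1 l2 l3 where L: "UNIV = {l1,l2,l3}" "l1\<noteq>l2" "l2\<noteq>l3" "l1\<noteq>l3" "e l2 \<le> e l1" "e l3 \<le> e l2"
    using sort3[OF card, of e] by blast
  have r: "(a i1=c k1 \<and> a i2=c k2 \<and> a i3=c k3 \<and> b j1=e l1 \<and> b j2=e l2 \<and> b j3=e l3) \<or>
        (a i1=e l1 \<and> a i2=e l2 \<and> a i3=e l3 \<and> b j1=c k1 \<and> b j2=c k2 \<and> b j3=c k3)"
  proof (rule prod3)
    show "{#a i1 * b j1, a i1 * b j2, a i1 * b j3, a i2 * b j1, a i2 * b j2, a i2 * b j3, a i3 * b j1, a i3 * b j2, a i3 * b j3#} =
      {#c k1 * e l1, c k1 * e l2, c k1 * e l3, c k2 * e l1, c k2 * e l2, c k2 * e l3, c k3 * e l1, c k3 * e l2, c k3 * e l3#}"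
      using P mp3[OF I(1-4) J(1-4), of a b] mp3[OF K(1-4) L(1-4), of c e] by simp
    show "a i1 + a i2 + a i3 = 1" using sums(1) sm3[OF I(1-4)] by simp
    show "b j1 + b j2 + b j3 = 1" using sums(2) sm3[OF J(1-4)] by simp
    show "c k1 + c k2 + c k3 = 1" using sums(3) sm3[OF K(1-4)] by simp
    show "e l1 + e l2 + e l3 = 1" using sums(4) sm3[OF L(1-4)] by simp
  qed (use pos I J K L in auto)
  thus ?thesis
    using ms3[OF I(1-4), of a] ms3[OF J(1-4), of b] ms3[OF K(1-4), of c] ms3[OF L(1-4), of e]
    by auto
qed

lemma comb2:
  fixes a b c e :: "'n::finite \<Rightarrow> real"
  assumes card: "CARD('n) = 2"
    and pos: "\<forall>i. 0 < a i" "\<forall>i. 0 < b i" "\<forall>i. 0 < c i" "\<forall>i. 0 < e i"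
    and sums: "(\<Sum>i\<in>UNIV. a i) = 1" "(\<Sum>i\<in>UNIV. b i) = 1" "(\<Sum>i\<in>UNIV. c i) = 1" "(\<Sum>i\<in>UNIV. e i) = 1"
    and P: "mset_of (\<lambda>k::'n\<times>'n. a (fst k) * b (snd k)) = mset_of (\<lambda>k. c (fst k) * e (snd k))"
  shows "(mset_of a = mset_of c \<and> mset_of b = mset_of e) \<or> (mset_of a = mset_of e \<and> mset_of b = mset_of c)"
proof -
  obtain i1 i2 where I: "UNIV = {i1,i2}" "i1\<noteq>i2" "a i2 \<le> a i1" using sort2[OF card, of a] by blast
  obtain j1 j2 where J: "UNIV = {j1,j2}" "j1\<noteq>j2" "b j2 \<le> b j1" using sort2[OF card, of b] by blast
  obtain k1 k2 where K: "UNIV = {k1,k2}" "k1\<noteq>k2" "c k2 \<le> c k1" using sort2[OF card, of c] by blast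
  obtain l1 l2 where L: "UNIV = {l1,l2}" "l1\<noteq>l2" "e l2 \<le> e l1" using sort2[OF card, of e] by blast
  have r: "(a i1=c k1 \<and> a i2=c k2 \<and> b j1=e l1 \<and> b j2=e l2) \<or>
        (a i1=e l1 \<and> a i2=e l2 \<and> b j1=c k1 \<and> b j2=c k2)"
  proof (rule prod2)
    show "{#a i1 * b j1, a i1 * b j2, a i2 * b j1, a i2 * b j2#} = {#c k1 * e l1, c k1 * e l2, c k2 * e l1, c k2 * e l2#}"
      using P mp2[OF I(1-2) J(1-2), of a b] mp2[OF K(1-2) L(1-2), of c e] by simp
    show "a i1 + a i2 = 1" using sums(1) sm2[OF I(1-2)] by simp
    show "b j1 + b j2 = 1" using sums(2) sm2[OF J(1-2)] by simp
    show "c k1 + c k2 = 1" using sums(3) sm2[OF K(1-2)] by simp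
    show "e l1 + e l2 = 1" using sums(4) sm2[OF L(1-2)] by simp
  qed (use pos I J K L in auto)
  thus ?thesis
    using ms2[OF I(1-2), of a] ms2[OF J(1-2), of b] ms2[OF K(1-2), of c] ms2[OF L(1-2), of e]
    by auto
qed


lemma sq_counts:
  fixes s t :: "'n::finite \<Rightarrow> real"
  assumes M: "mset_of (\<lambda>i. (s i)^2) = mset_of (\<lambda>i. (t i)^2)" and sp: "\<forall>i. s i > 0" and tp: "\<forall>i. t i > 0"
  shows "\<forall>x. card {i. s i = x} = card {i. t i = x}"
proof -
  have "image_mset sqrt (mset_of (\<lambda>i. (s i)^2)) = image_mset sqrt (mset_of (\<lambda>i. (t i)^2))" using M by simp
  hence "mset_of (\<lambda>i. sqrt ((s i)^2)) = mset_of (\<lambda>i. sqrt ((t i)^2))" by (simp only: mset_of_comp)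
  moreover have "(\<lambda>i. sqrt ((s i)^2)) = s" using sp by (simp add: less_imp_le)
  moreover have "(\<lambda>i. sqrt ((t i)^2)) = t" using tp by (simp add: less_imp_le)
  ultimately have "mset_of s = mset_of t" by simp
  thus ?thesis by (simp add: mset_of_eq_iff)
qed

theorem mainTheorem11:
  fixes mu lam mub lamb :: "complex^'n^'n"
  assumes "CARD('n) = 2 \<or> CARD('n) = 3"
    and "normalized mu" "normalized lam" "normalized mub" "normalized lamb"
    and "schmidt_rank mu = CARD('n)" "schmidt_rank lam = CARD('n)"
    and "schmidt_rank mub = CARD('n)" "schmidt_rank lamb = CARD('n)"
    and "LU_equiv (state_tensor mu lam) (state_tensor mub lamb)"
  shows "(LU_equiv mu mub \<and> LU_equiv lam lamb) \<or> (LU_equiv lam mub \<and> LU_equiv mu lamb)"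
proof -
  have sv: "\<exists>U V s. unitary_mat U \<and> unitary_mat V \<and> (\<forall>i. s i > 0) \<and> C = local_apply U V (diagr s)"
    if "schmidt_rank C = CARD('n)" for C :: "complex^'n^'n"
    using svd_full that unfolding schmidt_rank_def by blast
  obtain U1 V1 s1 where A1: "unitary_mat U1" "unitary_mat V1" "\<forall>i. s1 i > 0" "mu = local_apply U1 V1 (diagr s1)"
    using sv[OF assms(6)] by blast
  obtain U2 V2 s2 where A2: "unitary_mat U2" "unitary_mat V2" "\<forall>i. s2 i > 0" "lam = local_apply U2 V2 (diagr s2)"
    using sv[OF assms(7)] by blast
  obtain U3 V3 s3 where A3: "unitary_mat U3" "unitary_mat V3" "\<forall>i. s3 i > 0" "mub = local_apply U3 V3 (diagr s3)"
    using sv[OF assms(8)] by blast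
  obtain U4 V4 s4 where A4: "unitary_mat U4" "unitary_mat V4" "\<forall>i. s4 i > 0" "lamb = local_apply U4 V4 (diagr s4)"
    using sv[OF assms(9)] by blast
  have N1: "(\<Sum>i\<in>UNIV. (s1 i)^2) = 1" using normalized_sv[OF assms(2) A1(1,2,4)] .
  have N2: "(\<Sum>i\<in>UNIV. (s2 i)^2) = 1" using normalized_sv[OF assms(3) A2(1,2,4)] .
  have N3: "(\<Sum>i\<in>UNIV. (s3 i)^2) = 1" using normalized_sv[OF assms(4) A3(1,2,4)] .
  have N4: "(\<Sum>i\<in>UNIV. (s4 i)^2) = 1" using normalized_sv[OF assms(5) A4(1,2,4)] .
  define \<sigma> where "\<sigma> k = s1 (fst k) * s2 (snd k)" for k :: "'n\<times>'n"
  define \<sigma>' where "\<sigma>' k = s3 (fst k) * s4 (snd k)" for k :: "'n\<times>'n"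
  have T: "state_tensor mu lam = local_apply (state_tensor U1 U2) (state_tensor V1 V2) (diagr \<sigma>)"
    unfolding A1(4) A2(4) st_la st_diagr \<sigma>_def ..
  have T': "state_tensor mub lamb = local_apply (state_tensor U3 U4) (state_tensor V3 V4) (diagr \<sigma>')"
    unfolding A3(4) A4(4) st_la st_diagr \<sigma>'_def ..
  have sp: "\<forall>k. \<sigma> k > 0" using A1(3) A2(3) by (simp add: \<sigma>_def)
  have sp': "\<forall>k. \<sigma>' k > 0" using A3(3) A4(3) by (simp add: \<sigma>'_def)
  have cnt: "\<forall>x. card {k. \<sigma>' k = x} = card {k. \<sigma> k = x}"
    using LU_counts[OF assms(10)[unfolded T T'] unitary_st[OF A1(1) A2(1)] unitary_st[OF A1(2) A2(2)]
        unitary_st[OF A3(1) A4(1)] unitary_st[OF A3(2) A4(2)] sp sp'] by blast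
  hence "mset_of \<sigma> = mset_of \<sigma>'" by (simp add: mset_of_eq_iff)
  hence "image_mset (\<lambda>x. x^2) (mset_of \<sigma>) = image_mset (\<lambda>x. x^2) (mset_of \<sigma>')" by simp
  hence P: "mset_of (\<lambda>k::'n\<times>'n. (s1 (fst k))^2 * (s2 (snd k))^2) = mset_of (\<lambda>k. (s3 (fst k))^2 * (s4 (snd k))^2)"
    by (simp add: mset_of_comp \<sigma>_def \<sigma>'_def power_mult_distrib)
  have pos: "\<forall>i. 0 < (s1 i)^2" "\<forall>i. 0 < (s2 i)^2" "\<forall>i. 0 < (s3 i)^2" "\<forall>i. 0 < (s4 i)^2"
    using A1(3) A2(3) A3(3) A4(3) by (blast intro: zero_less_power)+
  have C: "(mset_of (\<lambda>i. (s1 i)^2) = mset_of (\<lambda>i. (s3 i)^2) \<and> mset_of (\<lambda>i. (s2 i)^2) = mset_of (\<lambda>i. (s4 i)^2)) \<or>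
           (mset_of (\<lambda>i. (s1 i)^2) = mset_of (\<lambda>i. (s4 i)^2) \<and> mset_of (\<lambda>i. (s2 i)^2) = mset_of (\<lambda>i. (s3 i)^2))"
    using assms(1)
  proof
    assume "CARD('n) = 2"
    from comb2[OF this pos N1 N2 N3 N4 P] show ?thesis .
  next
    assume "CARD('n) = 3"
    from comb3[OF this pos N1 N2 N3 N4 P] show ?thesis .
  qed
  thus ?thesis
  proof
    assume h: "mset_of (\<lambda>i. (s1 i)^2) = mset_of (\<lambda>i. (s3 i)^2) \<and> mset_of (\<lambda>i. (s2 i)^2) = mset_of (\<lambda>i. (s4 i)^2)"
    have "LU_equiv mu mub" unfolding A1(4) A3(4)
      by (rule LU_from_counts[OF A1(1,2) A3(1,2)]) (rule sq_counts[OF conjunct1[OF h] A1(3) A3(3)])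
    moreover have "LU_equiv lam lamb" unfolding A2(4) A4(4)
      by (rule LU_from_counts[OF A2(1,2) A4(1,2)]) (rule sq_counts[OF conjunct2[OF h] A2(3) A4(3)])
    ultimately show ?thesis by blast
  next
    assume h: "mset_of (\<lambda>i. (s1 i)^2) = mset_of (\<lambda>i. (s4 i)^2) \<and> mset_of (\<lambda>i. (s2 i)^2) = mset_of (\<lambda>i. (s3 i)^2)"
    have "LU_equiv lam mub" unfolding A2(4) A3(4)
      by (rule LU_from_counts[OF A2(1,2) A3(1,2)]) (rule sq_counts[OF conjunct2[OF h] A2(3) A3(3)])
    moreover have "LU_equiv mu lamb" unfolding A1(4) A4(4)
      by (rule LU_from_counts[OF A1(1,2) A4(1,2)]) (rule sq_counts[OF conjunct1[OF h] A1(3) A4(3)])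
    ultimately show ?thesis by blast
  qed
qed


end
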